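(* Let $r,s$ be positive integers, let $u<v<w$ be three points of $\mathbb{Z}^2$ in the same equivalence class, and let $P$ be a lattice path. Suppose that $P$ passes strictly west of $u$, weakly east of $v$, and weakly west of $w$. Then $P$ is invalid.
   Context: A lattice path is a path in $\mathbb{Z}^2$ consisting of unit steps north ($N$-steps, adding $(0,1)$) and east ($E$-steps, adding $(1,0)$). For fixed positive integers $r,s$, points $v,w\in\mathbb{Z}^2$ are equivalent if $v-w=\ell(r,s)$ for some $\ell\in\mathbb{Z}$; $[v]$ denotes the class of $v$. A lattice path $P$ is valid if whenever $P$ enters a point $v$ with an $E$-step, every later point of $P$ in $[v]$ is also entered by an $E$-step; otherwise it is invalid. $\mathbb{Z}^2$ is partially ordered componentwise: $(x,y)\le(x',y')$ iff $x\le x'$ and $y\le y'$ (and $<$ means $\le$ and $\neq$). A path $P$ passes strictly west of a point $v$ if there is a point $v'$ of $P$ with the same $y$-coordinate as $v$ and $v'<v$. $P$ passes weakly west of $v$ if $P$ has at least one point with the same $y$-coordinate as $v$ and every such point $v'$ satisfies $v'\le v$. $P$ passes weakly east of $v$ if $P$ has at least one point with the same $y$-coordinate as $v$ and every such point $v'$ satisfies $v'\ge v$. *)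

theory Defs
  imports Main "HOL-Library.Product_Order"
begin

type_synonym pt = "int \<times> int"

definition N_step :: "pt \<Rightarrow> pt \<Rightarrow> bool" where
  "N_step p q \<longleftrightarrow> fst q = fst p \<and> snd q = snd p + 1"

definition E_step :: "pt \<Rightarrow> pt \<Rightarrow> bool" where
  "E_step p q \<longleftrightarrow> fst q = fst p + 1 \<and> snd q = snd p"

definition lattice_path :: "pt list \<Rightarrow> bool" where
  "lattice_path ps \<longleftrightarrow> ps \<noteq> [] \<and>
     (\<forall>i. Suc i < length ps \<longrightarrow> N_step (ps ! i) (ps ! Suc i) \<or> E_step (ps ! i) (ps ! Suc i))"

definition equiv_pt :: "int \<Rightarrow> int \<Rightarrow> pt \<Rightarrow> pt \<Rightarrow> bool" where
  "equiv_pt r s v w \<longleftrightarrow> (\<exists>l::int. fst v - fst w = l * r \<and> snd v - snd w = l * s)"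

definition entered_E :: "pt list \<Rightarrow> nat \<Rightarrow> bool" where
  "entered_E ps i \<longleftrightarrow> 0 < i \<and> i < length ps \<and> E_step (ps ! (i - 1)) (ps ! i)"

definition valid_path :: "int \<Rightarrow> int \<Rightarrow> pt list \<Rightarrow> bool" where
  "valid_path r s ps \<longleftrightarrow>
     (\<forall>i j. entered_E ps i \<longrightarrow> i < j \<longrightarrow> j < length ps \<longrightarrow>
        equiv_pt r s (ps ! j) (ps ! i) \<longrightarrow> entered_E ps j)"

text \<open>The order on pt is the componentwise order from Product_Order.\<close>
definition passes_strictly_west :: "pt list \<Rightarrow> pt \<Rightarrow> bool" where
  "passes_strictly_west ps v \<longleftrightarrow> (\<exists>v'\<in>set ps. snd v' = snd v \<and> v' < v)"

definition passes_weakly_west :: "pt list \<Rightarrow> pt \<Rightarrow> bool" where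
  "passes_weakly_west ps v \<longleftrightarrow> (\<exists>v'\<in>set ps. snd v' = snd v) \<and>
     (\<forall>v'\<in>set ps. snd v' = snd v \<longrightarrow> v' \<le> v)"

definition passes_weakly_east :: "pt list \<Rightarrow> pt \<Rightarrow> bool" where
  "passes_weakly_east ps v \<longleftrightarrow> (\<exists>v'\<in>set ps. snd v' = snd v) \<and>
     (\<forall>v'\<in>set ps. snd v' = snd v \<longrightarrow> v \<le> v')"

end

theory Submission imports Defs begin

lemma lp_step:
  assumes "lattice_path P" "Suc i < length P"
  shows "(fst (P!Suc i) = fst (P!i) \<and> snd (P!Suc i) = snd (P!i) + 1) \<or>
         (fst (P!Suc i) = fst (P!i) + 1 \<and> snd (P!Suc i) = snd (P!i))"
  using assms unfolding lattice_path_def N_step_def E_step_def by blast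

lemma lp_sum:
  assumes "lattice_path P" "i < length P"
  shows "fst (P!i) + snd (P!i) = fst (P!0) + snd (P!0) + int i"
  using assms(2)
proof (induction i)
  case 0 then show ?case by simp
next
  case (Suc i)
  then show ?case using lp_step[OF assms(1) Suc.prems] by auto
qed

lemma lp_mono:
  assumes "lattice_path P" "i \<le> j" "j < length P"
  shows "fst (P!i) \<le> fst (P!j) \<and> snd (P!i) \<le> snd (P!j)"
  using assms(2,3)
proof (induction j rule: dec_induct)
  case base then show ?case by simp
next
  case (step j)
  then show ?case using lp_step[OF assms(1) step.prems] by auto
qed

lemma lp_idx_le:
  assumes "lattice_path P" "i < length P" "j < length P"
    "fst (P!i) + snd (P!i) \<le> fst (P!j) + snd (P!j)"
  shows "i \<le> j"
  using lp_sum[OF assms(1) assms(2)] lp_sum[OF assms(1) assms(3)] assms(4) by simp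

lemma row_interval:
  assumes lp: "lattice_path P" and "(x1,y) \<in> set P" "(x2,y) \<in> set P" "x1 \<le> x" "x \<le> x2"
  shows "(x,y) \<in> set P"
proof -
  obtain i where i: "i < length P" "P!i = (x1,y)" using assms(2) by (auto simp: in_set_conv_nth)
  obtain j where j: "j < length P" "P!j = (x2,y)" using assms(3) by (auto simp: in_set_conv_nth)
  have si: "x1 + y = fst (P!0) + snd (P!0) + int i" using lp_sum[OF lp i(1)] i(2) by simp
  have sj: "x2 + y = fst (P!0) + snd (P!0) + int j" using lp_sum[OF lp j(1)] j(2) by simp
  define k where "k = i + nat (x - x1)"
  have kj: "k \<le> j" using si sj assms(4,5) unfolding k_def by linarith
  have kn: "k < length P" using kj j(1) by simp
  have ik: "i \<le> k" unfolding k_def by simp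
  have "snd (P!k) = y" using lp_mono[OF lp ik kn] lp_mono[OF lp kj j(1)] i(2) j(2) by auto
  moreover have "fst (P!k) + snd (P!k) = x + y" using lp_sum[OF lp kn] si assms(4) unfolding k_def by simp
  ultimately have "P!k = (x,y)" by (metis add_right_cancel prod.collapse)
  then show ?thesis using kn by (metis nth_mem)
qed

lemma height_cover:
  assumes lp: "lattice_path P" and "i \<le> j" "j < length P" "snd (P!i) \<le> y" "y \<le> snd (P!j)"
  shows "\<exists>k\<le>j. snd (P!k) = y"
  using assms(2-5)
proof (induction j rule: dec_induct)
  case base then show ?case by auto
next
  case (step j)
  show ?case
  proof (cases "y \<le> snd (P!j)")
    case True then show ?thesis using step by (meson Suc_lessD le_Suc_eq)
  next
    case False
    then show ?thesis using lp_step[OF lp step.prems(1)] step.prems by (metis order.refl antisym_conv2 not_less zless_imp_add1_zle)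
  qed
qed

lemma cross:
  assumes lp: "lattice_path P" and "i \<le> j" "j < length P" "snd (P!i) \<le> y" "y < snd (P!j)"
  shows "\<exists>k. i \<le> k \<and> k < j \<and> snd (P!k) = y \<and> snd (P!Suc k) = y + 1 \<and> fst (P!Suc k) = fst (P!k)"
  using assms(2-5)
proof (induction j rule: dec_induct)
  case base then show ?case by auto
next
  case (step j)
  show ?case
  proof (cases "y < snd (P!j)")
    case True then show ?thesis using step by (meson Suc_lessD less_Suc_eq)
  next
    case False
    have "snd (P!j) = y \<and> snd (P!Suc j) = y + 1 \<and> fst (P!Suc j) = fst (P!j)"
      using lp_step[OF lp step.prems(1)] step.prems False by auto
    then show ?thesis using step.hyps by auto
  qed
qed

lemma obtain_idx:
  assumes "a \<in> set P" obtains p where "p < length P" "P!p = a"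
  using assms by (metis in_set_conv_nth)

definition row :: "pt list \<Rightarrow> int \<Rightarrow> int set" where
  "row P y = {x. (x,y) \<in> set P}"

definition LL :: "pt list \<Rightarrow> int \<Rightarrow> int" where "LL P y = Min (row P y)"
definition RR :: "pt list \<Rightarrow> int \<Rightarrow> int" where "RR P y = Max (row P y)"

lemma row_finite: "finite (row P y)"
proof -
  have "row P y \<subseteq> fst ` set P" unfolding row_def by force
  then show ?thesis by (meson finite_set finite_imageI finite_subset)
qed

lemma LL_in: "row P y \<noteq> {} \<Longrightarrow> (LL P y, y) \<in> set P"
  using Min_in[OF row_finite] unfolding LL_def row_def by blast
lemma RR_in: "row P y \<noteq> {} \<Longrightarrow> (RR P y, y) \<in> set P"
  using Max_in[OF row_finite] unfolding RR_def row_def by blast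
lemma LL_le: "(t, y) \<in> set P \<Longrightarrow> LL P y \<le> t"
  using Min_le[OF row_finite] unfolding LL_def row_def by blast
lemma RR_ge: "(t, y) \<in> set P \<Longrightarrow> t \<le> RR P y"
  using Max_ge[OF row_finite] unfolding RR_def row_def by blast
lemma LL_RR: "row P y \<noteq> {} \<Longrightarrow> LL P y \<le> RR P y"
  using LL_le RR_in by blast
lemma row_ne: "(t, y) \<in> set P \<Longrightarrow> row P y \<noteq> {}"
  unfolding row_def by blast

lemma row_between:
  assumes lp: "lattice_path P" and "(x1,y1) \<in> set P" "(x2,y2) \<in> set P" "y1 \<le> y" "y \<le> y2"
  shows "row P y \<noteq> {}"
proof -
  obtain i where i: "i < length P" "P!i = (x1,y1)" using assms(2) by (auto simp: in_set_conv_nth)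
  obtain j where j: "j < length P" "P!j = (x2,y2)" using assms(3) by (auto simp: in_set_conv_nth)
  show ?thesis
  proof (cases "i \<le> j")
    case True
    then obtain k where "k \<le> j" "snd (P!k) = y" using height_cover[OF lp True j(1)] i j assms(4,5) by auto
    then have "(fst (P!k), y) \<in> set P" using j(1) by (metis nth_mem order.strict_trans1 prod.collapse)
    then show ?thesis by (rule row_ne)
  next
    case False
    then have "y2 \<le> y1" using lp_mono[OF lp _ i(1), of j] i j by auto
    then have "y = y1" using assms(4,5) by simp
    then show ?thesis using assms(2) row_ne by blast
  qed
qed

lemma up_step:
  assumes lp: "lattice_path P" and "row P y \<noteq> {}" "row P (y+1) \<noteq> {}"
  shows "LL P (y+1) = RR P y"
proof -
  obtain x where x: "(x,y) \<in> set P" using assms(2) unfolding row_def by auto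
  obtain x' where x': "(x',y+1) \<in> set P" using assms(3) unfolding row_def by auto
  obtain i where i: "i < length P" "P!i = (x,y)" using x unfolding in_set_conv_nth by blast
  obtain j where j: "j < length P" "P!j = (x',y+1)" using x' unfolding in_set_conv_nth by blast
  have ij: "i \<le> j"
  proof (rule ccontr)
    assume "\<not> i \<le> j"
    then have "j \<le> i" by simp
    from lp_mono[OF lp this i(1)] have "snd (P!j) \<le> snd (P!i)" by simp
    then show False using i(2) j(2) by simp
  qed
  have c1: "snd (P!i) \<le> y" "y < snd (P!j)" using i(2) j(2) by simp_all
  obtain k where k: "i \<le> k" "k < j" "snd (P!k) = y" "snd (P!Suc k) = y + 1" "fst (P!Suc k) = fst (P!k)"
    using cross[OF lp ij j(1) c1] by blast
  have kn: "Suc k < length P" using k(2) j(1) by simp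
  have kn': "k < length P" using kn by simp
  define z where "z = fst (P!k)"
  have "P!k = (z,y)" using k(3) unfolding z_def by (simp add: prod_eq_iff)
  then have z1: "(z,y) \<in> set P" using kn' by (metis nth_mem)
  have "P!Suc k = (z,y+1)" using k(4,5) unfolding z_def by (simp add: prod_eq_iff)
  then have z2: "(z,y+1) \<in> set P" using kn by (metis nth_mem)
  have a1: "t \<le> z" if tin: "(t,y) \<in> set P" for t
  proof -
    obtain p where p: "p < length P" "P!p = (t,y)" using tin by (rule obtain_idx)
    have "p \<le> k"
    proof (rule ccontr)
      assume "\<not> p \<le> k"
      then have "Suc k \<le> p" by simp
      from lp_mono[OF lp this p(1)] have "snd (P!Suc k) \<le> snd (P!p)" by simp
      then show False using p(2) k(4) by simp
    qed
    from lp_mono[OF lp this kn'] have "fst (P!p) \<le> fst (P!k)" by simp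
    then show ?thesis using p(2) unfolding z_def by simp
  qed
  have a2: "z \<le> t" if tin: "(t,y+1) \<in> set P" for t
  proof -
    obtain p where p: "p < length P" "P!p = (t,y+1)" using tin by (rule obtain_idx)
    have "Suc k \<le> p"
    proof (rule ccontr)
      assume "\<not> Suc k \<le> p"
      then have "p \<le> k" by simp
      from lp_mono[OF lp this kn'] have "snd (P!p) \<le> snd (P!k)" by simp
      then show False using p(2) k(3) by simp
    qed
    from lp_mono[OF lp this p(1)] have "fst (P!Suc k) \<le> fst (P!p)" by simp
    then show ?thesis using p(2) k(5) unfolding z_def by simp
  qed
  have "LL P (y+1) = z" using LL_le[OF z2] a2[OF LL_in[OF assms(3)]] by simp
  moreover have "RR P y = z" using RR_ge[OF z1] a1[OF RR_in[OF assms(2)]] by simp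
  ultimately show ?thesis by simp
qed

lemma entered_char:
  assumes lp: "lattice_path P" and "j < length P" "P!j = (x,y)" "(x-1,y) \<in> set P"
  shows "entered_E P j"
proof -
  obtain i where i: "i < length P" "P!i = (x-1,y)" using assms(4) by (auto simp: in_set_conv_nth)
  have "int j = int i + 1" using lp_sum[OF lp i(1)] lp_sum[OF lp assms(2)] i assms(3) by simp
  then have "i = j - 1" "0 < j" by auto
  then have "E_step (P!(j-1)) (P!j)" unfolding E_step_def using assms(3) i(2) by simp
  then show ?thesis unfolding entered_E_def using assms(2) \<open>0 < j\<close> by simp
qed

lemma not_entered:
  assumes "P!j = (x,y)" "(x-1,y) \<notin> set P"
  shows "\<not> entered_E P j"
proof
  assume "entered_E P j"
  then have "j - 1 < length P" "E_step (P!(j-1)) (P!j)" unfolding entered_E_def by auto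
  then have e: "fst (P!j) = fst (P!(j-1)) + 1 \<and> snd (P!j) = snd (P!(j-1))" unfolding E_step_def by simp
  then have "fst (P!(j-1)) = x - 1" "snd (P!(j-1)) = y" using assms(1) by auto
  then have "P!(j-1) = (x-1,y)" by (simp add: prod_eq_iff)
  then show False using assms(2) \<open>j - 1 < length P\<close> by (metis nth_mem)
qed

lemma dich:
  assumes lp: "lattice_path P" and val: "valid_path r s P" and "r > 0" "s > 0"
    and ne1: "row P y \<noteq> {}" and ne2: "row P (y+s) \<noteq> {}"
  shows "LL P (y+s) - r \<le> LL P y \<or> LL P (y+s) - r > RR P y"
proof (rule ccontr)
  assume "\<not> ?thesis"
  then have h: "LL P y < LL P (y+s) - r" "LL P (y+s) - r \<le> RR P y" by auto
  define x where "x = LL P (y+s) - r"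
  have q: "(x,y) \<in> set P" using row_interval[OF lp LL_in[OF ne1] RR_in[OF ne1]] h unfolding x_def by simp
  have q1: "(x-1,y) \<in> set P" using row_interval[OF lp LL_in[OF ne1] RR_in[OF ne1]] h unfolding x_def by simp
  have q2: "(x+r,y+s) \<in> set P" using LL_in[OF ne2] unfolding x_def by simp
  have q3: "(x+r-1,y+s) \<notin> set P" using LL_le[of "x+r-1" "y+s" P] unfolding x_def by auto
  obtain i where i: "i < length P" "P!i = (x,y)" using q by (auto simp: in_set_conv_nth)
  obtain j where j: "j < length P" "P!j = (x+r,y+s)" using q2 by (auto simp: in_set_conv_nth)
  have ei: "entered_E P i" using entered_char[OF lp i q1] .
  have nj: "\<not> entered_E P j" using not_entered[OF j(2)] q3 by simp
  have "int j = int i + r + s" using lp_sum[OF lp i(1)] lp_sum[OF lp j(1)] i j by simp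
  then have ij: "i < j" using assms(3,4) by simp
  have eq: "equiv_pt r s (P!j) (P!i)" unfolding equiv_pt_def using i j by (intro exI[of _ 1]) simp
  have "entered_E P j" using val ei ij j(1) eq unfolding valid_path_def by simp
  then show False using nj by simp
qed

lemma LL_mono:
  assumes lp: "lattice_path P" and ne: "\<forall>z. y1 \<le> z \<and> z \<le> y2 \<longrightarrow> row P z \<noteq> {}"
    and "y1 \<le> y"
  shows "y + int n \<le> y2 \<Longrightarrow> LL P y \<le> LL P (y + int n)"
proof (induction n)
  case 0 then show ?case by simp
next
  case (Suc n)
  let ?z = "y + int n"
  have n1: "row P ?z \<noteq> {}" "row P (?z+1) \<noteq> {}" using ne assms(3) Suc.prems by auto
  have "LL P (?z + 1) = RR P ?z" using up_step[OF lp n1] .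
  moreover have "LL P ?z \<le> RR P ?z" using LL_RR[OF n1(1)] .
  moreover have "LL P y \<le> LL P ?z" using Suc by simp
  moreover have "LL P (y + int (Suc n)) = LL P (?z + 1)" by (simp add: algebra_simps)
  ultimately show ?case by linarith
qed

lemma propagate:
  assumes lp: "lattice_path P" and val: "valid_path r s P" and rs: "r > 0" "s > 0"
    and ne: "\<forall>z. y1 \<le> z \<and> z \<le> y2 \<longrightarrow> row P z \<noteq> {}"
    and "y1 \<le> y" and hi: "LL P (y+s) - r > RR P y"
  shows "y + int n + s \<le> y2 \<Longrightarrow> LL P (y + int n + s) - r > RR P (y + int n)"
proof (induction n)
  case 0 then show ?case using hi by simp
next
  case (Suc n)
  let ?z = "y + int n"
  have IH: "LL P (?z + s) - r > RR P ?z" using Suc by simp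
  have n1: "row P ?z \<noteq> {}" "row P (?z+1) \<noteq> {}" "row P (?z+1+s) \<noteq> {}"
    using ne assms(6) Suc.prems rs by auto
  have e1: "LL P (?z + 1) = RR P ?z" using up_step[OF lp n1(1,2)] .
  have "LL P (?z + s) \<le> LL P (?z + s + int 1)"
    by (rule LL_mono[OF lp ne]) (use assms(6) Suc.prems rs in auto)
  then have "LL P (?z+1+s) - r > LL P (?z+1)" using IH e1 by (simp add: algebra_simps)
  then have "LL P (?z+1+s) - r > RR P (?z+1)" using dich[OF lp val rs n1(2,3)] by linarith
  then show ?case by (simp add: algebra_simps)
qed

lemma get_mult:
  assumes "r > 0" "s > 0" "u < v" "equiv_pt r s u v"
  shows "\<exists>a::int. a \<ge> 1 \<and> fst v = fst u + a * r \<and> snd v = snd u + a * s"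
proof -
  obtain l where l: "fst u - fst v = l * r" "snd u - snd v = l * s" using assms(4) unfolding equiv_pt_def by blast
  have le: "fst u \<le> fst v" "snd u \<le> snd v" using assms(3) by (auto simp: less_eq_prod_def less_prod_def)
  have "l \<le> 0" using l(1) le(1) assms(1) by (metis diff_ge_0_iff_ge diff_le_0_iff_le mult_le_0_iff not_less order.strict_iff_not zero_less_mult_iff)
  moreover have "l \<noteq> 0"
  proof
    assume "l = 0"
    then have "u = v" using l by (simp add: prod_eq_iff)
    then show False using assms(3) by simp
  qed
  ultimately show ?thesis using l by (intro exI[of _ "-l"]) (auto simp: algebra_simps)
qed

theorem mainTheorem3:
  fixes r s :: int and u v w :: pt and P :: "pt list"
  assumes "r > 0" and "s > 0"
    and "u < v" and "v < w"
    and "equiv_pt r s u v" and "equiv_pt r s v w"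
    and "lattice_path P"
    and "passes_strictly_west P u"
    and "passes_weakly_east P v"
    and "passes_weakly_west P w"
  shows "\<not> valid_path r s P"
proof
  assume val: "valid_path r s P"
  note rs = assms(1,2)
  note lp = assms(7)
  obtain a :: int where a: "a \<ge> 1" "fst v = fst u + a * r" "snd v = snd u + a * s"
    using get_mult[OF rs assms(3,5)] by blast
  obtain b :: int where b: "b \<ge> 1" "fst w = fst v + b * r" "snd w = snd v + b * s"
    using get_mult[OF rs assms(4,6)] by blast
  obtain pu where pu: "pu \<in> set P" "snd pu = snd u" "pu < u" using assms(8) unfolding passes_strictly_west_def by blast
  have pu1: "fst pu < fst u" using pu(2,3) by (auto simp: less_eq_prod_def less_prod_def)
  have pu2: "(fst pu, snd u) \<in> set P" using pu by (metis prod.collapse)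
  obtain pw where pw: "pw \<in> set P" "snd pw = snd w" using assms(10) unfolding passes_weakly_west_def by blast
  have pw2: "(fst pw, snd w) \<in> set P" using pw by (metis prod.collapse)
  have ne: "\<forall>z. snd u \<le> z \<and> z \<le> snd w \<longrightarrow> row P z \<noteq> {}"
    using row_between[OF lp pu2 pw2] by blast
  define Y where "Y j = snd u + j * s" for j :: int
  define f where "f j = LL P (Y j) - (fst u + j * r)" for j :: int
  have neY: "row P (Y j) \<noteq> {}" if "0 \<le> j" "j \<le> a + b" for j
  proof -
    have "snd u \<le> Y j" using that rs unfolding Y_def by simp
    moreover have "j * s \<le> (a + b) * s" using that rs by (simp add: mult_right_mono)
    then have "Y j \<le> snd w" using a b unfolding Y_def by (simp add: algebra_simps)
    ultimately show ?thesis using ne by blast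
  qed
  have Ys: "Y j + s = Y (j+1)" for j unfolding Y_def by (simp add: algebra_simps)
  have f0: "f 0 < 0"
  proof -
    have "LL P (snd u) \<le> fst pu" using LL_le[OF pu2] .
    then show ?thesis using pu1 unfolding f_def Y_def by simp
  qed
  have fa: "f a \<ge> 0"
  proof -
    have nev: "row P (snd v) \<noteq> {}" using neY[of a] a b unfolding Y_def by simp
    have "(LL P (snd v), snd v) \<in> set P" using LL_in[OF nev] .
    then have "v \<le> (LL P (snd v), snd v)" using assms(9) unfolding passes_weakly_east_def by auto
    then have "fst v \<le> LL P (snd v)" by (simp add: less_eq_prod_def)
    then show ?thesis using a unfolding f_def Y_def by simp
  qed
  have fab: "f (a+b) \<le> 0"
  proof -
    have new: "row P (snd w) \<noteq> {}" using row_ne[OF pw2] .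
    have "(RR P (snd w), snd w) \<in> set P" using RR_in[OF new] .
    then have "(RR P (snd w), snd w) \<le> w" using assms(10) unfolding passes_weakly_west_def by auto
    then have "RR P (snd w) \<le> fst w" by (simp add: less_eq_prod_def)
    moreover have "LL P (snd w) \<le> RR P (snd w)" using LL_RR[OF new] .
    moreover have "Y (a+b) = snd w" using a b unfolding Y_def by (simp add: algebra_simps)
    ultimately show ?thesis using a b unfolding f_def by (simp add: algebra_simps)
  qed
  define high where "high j \<longleftrightarrow> LL P (Y j + s) - r > RR P (Y j)" for j
  have hprop: "high k" if "high j" "0 \<le> j" "j \<le> k" "k + 1 \<le> a + b" for j k
  proof -
    have "Y j + int (nat ((k - j) * s)) = Y k" using that rs unfolding Y_def by (simp add: algebra_simps)
    moreover have "(k + 1) * s \<le> (a + b) * s" using that rs by (simp add: mult_right_mono)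
    then have "Y k + s \<le> snd w" using a b unfolding Y_def by (simp add: algebra_simps)
    moreover have "snd u \<le> Y j" using that rs unfolding Y_def by simp
    ultimately show ?thesis
      using propagate[OF lp val rs ne, of "Y j" "nat ((k - j) * s)"] that(1) unfolding high_def by simp
  qed
  show False
  proof (cases "high (a - 1)")
    case False
    have "int m \<le> a \<longrightarrow> f (int m) \<le> f 0" for m :: nat
    proof (induction m)
      case 0 then show ?case by simp
    next
      case (Suc m)
      show ?case
      proof
        assume m: "int (Suc m) \<le> a"
        have nh: "\<not> high (int m)" using hprop[of "int m" "a - 1"] False m a b by auto
        have "LL P (Y (int m) + s) - r \<le> LL P (Y (int m))"
          using dich[OF lp val rs neY[of "int m"]] neY[of "int m + 1"] Ys[of "int m"] nh m b
          unfolding high_def by auto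
        then have "f (int m + 1) \<le> f (int m)" unfolding f_def using Ys[of "int m"] by (simp add: algebra_simps)
        then show "f (int (Suc m)) \<le> f 0" using Suc m by (simp add: add.commute)
      qed
    qed
    from this[of "nat a"] have "f a \<le> f 0" using a by simp
    then show False using f0 fa by simp
  next
    case True
    have "int m \<le> b \<longrightarrow> f (a + int m) \<ge> f a + int m" for m :: nat
    proof (induction m)
      case 0 then show ?case by simp
    next
      case (Suc m)
      show ?case
      proof
        assume m: "int (Suc m) \<le> b"
        have hi: "high (a + int m)" using hprop[of "a - 1" "a + int m"] True m a b by auto
        have ne1: "row P (Y (a + int m)) \<noteq> {}" using neY[of "a + int m"] m a b by simp
        have "LL P (Y (a + int m) + s) - r > LL P (Y (a + int m))"
          using hi LL_RR[OF ne1] unfolding high_def by simp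
        then have "f (a + int m + 1) > f (a + int m)" unfolding f_def using Ys[of "a + int m"] by (simp add: algebra_simps)
        then show "f (a + int (Suc m)) \<ge> f a + int (Suc m)" using Suc m by (simp add: algebra_simps)
      qed
    qed
    from this[of "nat b"] have "f (a + b) \<ge> f a + b" using b by simp
    then show False using fa fab b by simp
  qed
qed

end
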